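(* Let $\Omega_n=\dfrac{\pi^{n/2}}{\Gamma\left(\frac n2+1\right)}$ for $n\in\mathbb{N}_0$. Let $c_0=1$ and, for $j\in\mathbb{N}$, \[ c_j=\frac1j\sum_{k=1}^j(-1)^k\left[B_{k+1}\left(\tfrac12\right)-B_{k+1}(1)\right]\frac{2^k}{k+1}c_{j-k}, \] where $B_m(x)$ are the Bernoulli polynomials. As $n\to\infty$, the following asymptotic formula holds: \[ \frac{\Omega_{n-1}}{\Omega_n}=\sqrt{\frac{n+\frac12}{2\pi}+\sum_{j=1}^\infty\frac{s_j}{n^j}},\qquad s_j=\frac1{2\pi}\sum_{k=0}^{j+1}c_kc_{j+1-k}\quad(j\in\mathbb{N}). \]
   Context: $\Omega_n$ is the volume of the unit ball in $\mathbb{R}^n$; $\Gamma$ is Euler's gamma function. The Bernoulli polynomials are defined by $\frac{te^{xt}}{e^t-1}=\sum_{m\ge0}B_m(x)\frac{t^m}{m!}$. The formula is an asymptotic expansion: for every $N$, $\left(\frac{\Omega_{n-1}}{\Omega_n}\right)^2-\frac{n+1/2}{2\pi}-\sum_{j=1}^Ns_jn^{-j}=O(n^{-N-1})$ as $n\to\infty$. *)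

theory Defs
  imports "HOL-Analysis.Analysis" "HOL-Computational_Algebra.Formal_Power_Series"
    "HOL-Library.Landau_Symbols"
begin

definition Omega :: "nat \<Rightarrow> real" where
  "Omega n = pi powr (real n / 2) / Gamma (real n / 2 + 1)"

definition bernpoly :: "nat \<Rightarrow> real \<Rightarrow> real" where
  "bernpoly m x = fact m * fps_nth ((fps_X * fps_exp x) / (fps_exp 1 - 1)) m"

fun cc :: "nat \<Rightarrow> real" where
  "cc 0 = 1"
| "cc (Suc j) = (1 / real (Suc j)) *
     (\<Sum>k = 1..Suc j. (-1) ^ k * (bernpoly (k + 1) (1/2) - bernpoly (k + 1) 1)
        * 2 ^ k / real (k + 1) * cc (Suc j - k))"

definition ss :: "nat \<Rightarrow> real" where
  "ss j = (1 / (2 * pi)) * (\<Sum>k = 0..j + 1. cc k * cc (j + 1 - k))"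

end

theory Submission
  imports Defs "HOL-Computational_Algebra.Polynomial_FPS"
begin

unbundle no vec_syntax
notation fps_nth (infixl \<open>$\<close> 75)



definition PP :: "real \<Rightarrow> real fps" where
  "PP x = (fps_X * fps_exp x) / (fps_exp 1 - 1)"

definition QQ :: "real fps" where "QQ = PP (1/2) - PP 1"

lemma E1_ne: "fps_exp (1::real) - 1 \<noteq> 0"
proof
  assume "fps_exp (1::real) - 1 = 0"
  hence "(fps_exp (1::real) - 1) $ 1 = 0" by simp
  thus False by simp
qed

lemma PP_mult: "PP x * (fps_exp 1 - 1) = fps_X * fps_exp x"
  unfolding PP_def
proof (rule fps_times_divide_eq[OF E1_ne])
  have "subdegree (fps_exp (1::real) - 1) \<le> 1"
    by (rule subdegree_leI) auto
  moreover have "subdegree (fps_X * fps_exp x :: real fps) = 1"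
    by (rule subdegreeI) auto
  ultimately show "subdegree (fps_exp 1 - 1 :: real fps) \<le> subdegree (fps_X * fps_exp x :: real fps)" by linarith
qed

lemma QQ_ident: "(1 + fps_exp (1/2)) * QQ = - (fps_X * fps_exp (1/2))"
proof -
  let ?h = "fps_exp (1/2::real)"
  have E: "fps_exp (1::real) = ?h * ?h"
    using fps_exp_add_mult[of "1/2::real" "1/2"] by simp
  have "(1 + ?h) * QQ * (fps_exp 1 - 1) = (1 + ?h) * (fps_X * ?h - fps_X * fps_exp 1)"
    unfolding QQ_def by (simp add: algebra_simps PP_mult[symmetric])
  also have "\<dots> = - (fps_X * ?h) * (fps_exp 1 - 1)"
    unfolding E by (simp add: algebra_simps)
  finally show ?thesis using E1_ne by (metis mult_right_cancel minus_mult_left)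
qed

lemma bernpoly_QQ: "bernpoly n (1/2) - bernpoly n 1 = fact n * QQ $ n"
  unfolding bernpoly_def QQ_def PP_def by (simp add: algebra_simps)

lemma QQ0: "QQ $ 0 = 0" and QQ1: "QQ $ 1 = - 1/2"
proof -
  have a: "((1 + fps_exp (1/2)) * QQ) $ 0 = (- (fps_X * fps_exp (1/2::real))) $ 0"
    using QQ_ident by simp
  have b: "((1 + fps_exp (1/2)) * QQ) $ 1 = (- (fps_X * fps_exp (1/2::real))) $ 1"
    using QQ_ident by simp
  from a show "QQ $ 0 = 0" by (simp add: fps_mult_nth)
  with b show "QQ $ 1 = - 1/2" by (simp add: fps_mult_nth)
qed




definition bb :: "nat \<Rightarrow> real" where
  "bb k = (-1) ^ k * (bernpoly (k + 1) (1/2) - bernpoly (k + 1) 1) * 2 ^ k / real (k + 1)"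

lemma bb_QQ: "bb k = (-1) ^ k * fact k * 2 ^ k * QQ $ (k + 1)"
proof -
  have "fact (k+1) / real (k+1) = (fact k :: real)" by (simp add: field_simps)
  then show ?thesis unfolding bb_def bernpoly_QQ
    by (metis (no_types, lifting) mult.assoc mult.commute times_divide_eq_right)
qed

lemma gch: assumes "q \<le> m"
  shows "((- (of_nat q + 2)) gchoose (m - q) :: real) = (-1) ^ (m - q) * real ((m+1) choose (m - q))"
proof -
  have "((- (of_nat q + 2)) gchoose (m - q) :: real)
      = (-1) ^ (m - q) * ((of_nat (m - q) - (- (of_nat q + 2)) - 1) gchoose (m - q))"
    by (rule gbinomial_negated_upper)
  also have "(of_nat (m - q) - (- (of_nat q + 2)) - 1 :: real) = of_nat (m + 1)"
    using assms by (simp add: of_nat_diff)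
  also have "(of_nat (m + 1) gchoose (m - q) :: real) = real ((m+1) choose (m - q))"
    by (simp add: binomial_gbinomial)
  finally show ?thesis .
qed

definition uu :: "nat \<Rightarrow> real" where "uu i = (1/2) ^ i / fact i"

lemma term_eq: assumes "q \<le> m"
  shows "bb (q+1) * ((- (of_nat q + 2)) gchoose (m - q))
       = (-1) ^ (m+1) * fact (m+1) * 2 ^ (m+1) * (uu (m - q) * QQ $ (q + 2))"
proof -
  have f: "fact (q+1) * real ((m+1) choose (m - q)) * fact (m - q) = fact (m+1)"
  proof -
    have "fact (m - q) * fact (m + 1 - (m - q)) * ((m+1) choose (m - q)) = fact (m+1)"
      using assms by (intro binomial_fact_lemma) simp
    moreover have "m + 1 - (m - q) = q + 1" using assms by simp
    ultimately have "fact (m - q) * fact (q + 1) * ((m+1) choose (m - q)) = (fact (m+1) :: nat)"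
      by simp
    then have "real (fact (m - q) * fact (q + 1) * ((m+1) choose (m - q))) = fact (m+1)"
      by (metis of_nat_fact)
    then show ?thesis by (simp add: algebra_simps)
  qed
  have f': "fact (q+1) * real ((m+1) choose (m - q)) = fact (m+1) / fact (m - q)"
    using f by (simp add: field_simps)
  have s: "(-1::real) ^ (q+1) * (-1) ^ (m - q) = (-1) ^ (m+1)"
    using assms by (simp add: power_add[symmetric])
  have p: "(2::real) ^ (q+1) = 2 ^ (m+1) * (1/2) ^ (m - q)"
  proof -
    have "(2::real) ^ (m+1) = 2 ^ (q+1) * 2 ^ (m - q)" using assms by (simp add: power_add[symmetric])
    then show ?thesis by (simp add: power_one_over field_simps)
  qed
  have "bb (q+1) * ((- (of_nat q + 2)) gchoose (m - q))
      = ((-1) ^ (q+1) * (-1) ^ (m - q)) * (fact (q+1) * real ((m+1) choose (m - q))) * 2 ^ (q+1) * QQ $ (q + 2)"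
    unfolding bb_QQ gch[OF assms] by (simp add: algebra_simps)
  also have "\<dots> = (-1) ^ (m+1) * (fact (m+1) / fact (m - q)) * (2 ^ (m+1) * (1/2) ^ (m - q)) * QQ $ (q + 2)"
    by (simp only: s p f')
  also have "\<dots> = (-1) ^ (m+1) * fact (m+1) * 2 ^ (m+1) * (uu (m - q) * QQ $ (q + 2))"
    unfolding uu_def by (simp add: field_simps)
  finally show ?thesis .
qed

lemma D_ident: "QQ $ (m+2) + (\<Sum>q\<le>m. uu (m - q) * QQ $ (q + 2)) = - uu (m+1) / 2"
proof -
  let ?h = "fps_exp (1/2::real)"
  have c: "((1 + ?h) * QQ) $ (m+2) = (- (fps_X * ?h)) $ (m+2)"
    using QQ_ident by simp
  have r: "(- (fps_X * ?h)) $ (m+2) = - uu (m+1)" 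
    by (simp add: uu_def power_one_over del: fact_Suc)
  have l: "((1 + ?h) * QQ) $ (m+2) = QQ $ (m+2) + (\<Sum>i=0..m+2. uu i * QQ $ (m + 2 - i))"
  proof -
    have hu: "?h $ i = uu i" for i by (simp add: uu_def power_one_over)
    have "((1 + ?h) * QQ) = QQ + ?h * QQ" by (simp add: algebra_simps)
    then have "((1 + ?h) * QQ) $ (m+2) = QQ $ (m+2) + (?h * QQ) $ (m+2)" by simp
    also have "(?h * QQ) $ (m+2) = (\<Sum>i=0..m+2. ?h $ i * QQ $ (m + 2 - i))" by (rule fps_mult_nth)
    finally show ?thesis by (simp only: hu)
  qed
  have "(\<Sum>i=0..m+2. uu i * QQ $ (m + 2 - i)) = (\<Sum>i=0..m. uu i * QQ $ (m + 2 - i)) + uu (m+1) * QQ $ 1 + uu (m+2) * QQ $ 0"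
    by (simp add: numeral_2_eq_2)
  also have "\<dots> = (\<Sum>i=0..m. uu i * QQ $ (m + 2 - i)) - uu (m+1) / 2"
    using QQ0 QQ1 by simp
  also have "(\<Sum>i=0..m. uu i * QQ $ (m + 2 - i)) = (\<Sum>q\<le>m. uu (m - q) * QQ $ (q + 2))"
  proof -
    have "(\<Sum>i=0..m. uu i * QQ $ (m + 2 - i)) = (\<Sum>q=0..m. uu (m - q) * QQ $ (m + 2 - (m - q)))"
      by (rule sum.atLeastAtMost_rev[of _ 0 m, simplified])
    also have "\<dots> = (\<Sum>q\<le>m. uu (m - q) * QQ $ (q + 2))"
      by (simp add: atLeast0AtMost Suc_diff_le)
    finally show ?thesis .
  qed
  finally show ?thesis using c r l by linarith
qed

lemma ident_I:
  "2 * bb (m+1) + 2 * (\<Sum>q\<le>m. bb (q+1) * ((- (of_nat q + 2)) gchoose (m - q))) = (-1) ^ m"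
proof -
  have "(\<Sum>q\<le>m. bb (q+1) * ((- (of_nat q + 2)) gchoose (m - q)))
     = (-1) ^ (m+1) * fact (m+1) * 2 ^ (m+1) * (\<Sum>q\<le>m. uu (m - q) * QQ $ (q + 2))"
    unfolding sum_distrib_left by (rule sum.cong[OF refl], rule term_eq, simp)
  moreover have "bb (m+1) = (-1) ^ (m+1) * fact (m+1) * 2 ^ (m+1) * QQ $ (m + 1 + 1)"
    by (rule bb_QQ)
  ultimately have "2 * bb (m+1) + 2 * (\<Sum>q\<le>m. bb (q+1) * ((- (of_nat q + 2)) gchoose (m - q)))
     = 2 * (-1) ^ (m+1) * fact (m+1) * 2 ^ (m+1) * (QQ $ (m+2) + (\<Sum>q\<le>m. uu (m - q) * QQ $ (q + 2)))"
    by (simp only: one_add_one add.assoc distrib_left mult.assoc)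
  also have "\<dots> = 2 * (-1) ^ (m+1) * fact (m+1) * 2 ^ (m+1) * (- uu (m+1) / 2)"
    by (simp only: D_ident)
  also have "\<dots> = (-1) ^ m" unfolding uu_def
    by (simp add: field_simps power_one_over del: fact_Suc)
  finally show ?thesis .
qed




definition Bin :: "nat \<Rightarrow> real fps" where "Bin k = fps_binomial (- real k)"
definition GG :: "real fps" where "GG = fps_X * Bin 1"
definition CC :: "real fps" where "CC = Abs_fps cc"
definition BB :: "real fps" where "BB = Abs_fps (\<lambda>k. bb (k+1))"

lemma Bin_add: "Bin (a + b) = Bin a * Bin b"
  unfolding Bin_def using fps_binomial_add_mult[of "- real a" "- real b"] by (simp add: add.commute)

lemma Bin_0: "Bin 0 = 1" unfolding Bin_def by simp

lemma Bin1_X: "Bin 1 * (1 + fps_X) = 1"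
proof -
  have "Bin 1 * (1 + fps_X) = fps_binomial (-1) * fps_binomial 1"
    by (simp add: Bin_def fps_binomial_1)
  also have "\<dots> = fps_binomial (-1 + 1)" by (simp only: fps_binomial_add_mult)
  finally show ?thesis by simp
qed

lemma GG0: "GG $ 0 = 0" unfolding GG_def by simp

lemma GG_power: "GG ^ q = fps_X ^ q * Bin q"
proof (induction q)
  case 0 then show ?case by (simp add: Bin_0)
next
  case (Suc q)
  have "GG ^ Suc q = GG ^ q * GG" by simp
  also have "\<dots> = (fps_X ^ q * Bin q) * (fps_X * Bin 1)" by (subst Suc.IH) (simp add: GG_def)
  also have "\<dots> = fps_X ^ Suc q * (Bin q * Bin 1)" by (simp add: algebra_simps)
  also have "Bin q * Bin 1 = Bin (Suc q)" using Bin_add[of q 1] by simp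
  finally show ?case .
qed

lemma XX_ne: "(1 + fps_X :: real fps) \<noteq> 0"
proof
  assume "(1 + fps_X :: real fps) = 0"
  hence "(1 + fps_X :: real fps) $ 0 = 0" by simp
  thus False by simp
qed

lemma deriv_GG: "fps_deriv GG = Bin 2"
proof -
  have d1: "(1 + fps_X) * fps_deriv (Bin 1) = - Bin 1"
  proof -
    have "fps_deriv (Bin 1 * (1 + fps_X)) = 0" by (simp only: Bin1_X) simp
    then have "Bin 1 + (1 + fps_X) * fps_deriv (Bin 1) = 0" by (simp add: algebra_simps)
    then show ?thesis by (metis neg_eq_iff_add_eq_0)
  qed
  have "(1 + fps_X)^2 * fps_deriv GG = (1 + fps_X)^2 * Bin 1 + fps_X * (1 + fps_X) * ((1 + fps_X) * fps_deriv (Bin 1))"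
    unfolding GG_def by (simp add: algebra_simps power2_eq_square)
  also have "\<dots> = (1 + fps_X) * (Bin 1 * (1 + fps_X)) - fps_X * (Bin 1 * (1 + fps_X))"
    unfolding d1 by (simp add: algebra_simps power2_eq_square)
  also have "\<dots> = 1" unfolding Bin1_X by simp
  finally have a: "(1 + fps_X)^2 * fps_deriv GG = 1" .
  have b2: "Bin 2 = Bin 1 * Bin 1" by (metis Bin_add one_add_one)
  have b: "(1 + fps_X)^2 * Bin 2 = 1"
  proof -
    have "(1 + fps_X)^2 * Bin 2 = (Bin 1 * (1 + fps_X)) * (Bin 1 * (1 + fps_X))"
      unfolding b2 by (simp add: power2_eq_square algebra_simps)
    also have "\<dots> = 1" by (simp only: Bin1_X mult_1_right)
    finally show ?thesis .
  qed
  from a b have "(1 + fps_X)^2 * fps_deriv GG = (1 + fps_X)^2 * Bin 2" by simp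
  then show ?thesis using XX_ne by (simp add: mult_left_cancel)
qed

lemma Bin_nth: "Bin k $ n = (- real k) gchoose n"
  by (simp add: Bin_def)

lemma Bin1_nth: "Bin 1 $ m = (-1) ^ m"
proof -
  have "((-1::real) gchoose m) = (-1) ^ m * ((of_nat m - (-1) - 1) gchoose m)"
    by (rule gbinomial_negated_upper)
  also have "((of_nat m - (-1) - 1 :: real) gchoose m) = 1"
    by (simp add: binomial_gbinomial[symmetric])
  finally show ?thesis by (simp add: Bin_nth)
qed

lemma Bin1_nth': "Bin (Suc 0) $ m = (-1) ^ m"
  using Bin1_nth by simp

lemma compose_trunc:
  assumes "i \<le> m"
  shows "(A oo GG) $ i = (\<Sum>q\<le>m. fps_const (A $ q) * GG ^ q) $ i"
proof -
  have "(A oo GG) $ i = (\<Sum>q=0..i. A $ q * (GG ^ q $ i))" by (rule fps_compose_nth)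
  also have "\<dots> = (\<Sum>q\<le>m. A $ q * (GG ^ q $ i))"
  proof (rule sum.mono_neutral_left)
    show "\<forall>q\<in>{..m} - {0..i}. A $ q * (GG ^ q $ i) = 0"
      using startsby_zero_power_prefix[OF GG0] by auto
  qed (use assms in auto)
  also have "\<dots> = (\<Sum>q\<le>m. fps_const (A $ q) * GG ^ q) $ i"
    by (simp add: fps_sum_nth)
  finally show ?thesis .
qed

lemma mult_trunc:
  assumes "\<And>i. i \<le> m \<Longrightarrow> F $ i = F' $ i"
  shows "(F * H) $ m = (F' * H) $ m"
  unfolding fps_mult_nth using assms by (intro sum.cong) auto

lemma compose_mult_nth: "((A oo GG) * H) $ m = (\<Sum>q\<le>m. A $ q * (GG ^ q * H) $ m)"
proof -
  have "((A oo GG) * H) $ m = ((\<Sum>q\<le>m. fps_const (A $ q) * GG ^ q) * H) $ m"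
    by (rule mult_trunc) (rule compose_trunc)
  also have "\<dots> = (\<Sum>q\<le>m. A $ q * (GG ^ q * H) $ m)"
    by (simp add: sum_distrib_right fps_sum_nth mult.assoc)
  finally show ?thesis .
qed

lemma K_ident: "2 * (BB + (BB oo GG) * Bin 2) = Bin 1"
proof (rule fps_ext)
  fix m
  have "((BB oo GG) * Bin 2) $ m = (\<Sum>q\<le>m. bb (q+1) * ((- (of_nat q + 2)) gchoose (m - q)))"
  proof -
    have "((BB oo GG) * Bin 2) $ m = (\<Sum>q\<le>m. BB $ q * (GG ^ q * Bin 2) $ m)"
      by (rule compose_mult_nth)
    also have "\<dots> = (\<Sum>q\<le>m. bb (q+1) * ((- (of_nat q + 2)) gchoose (m - q)))"
    proof (rule sum.cong[OF refl])
      fix q assume "q \<in> {..m}"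
      then have qm: "q \<le> m" by simp
      have "GG ^ q * Bin 2 = fps_X ^ q * Bin (q + 2)" unfolding GG_power Bin_add by (simp add: mult.assoc)
      then have "(GG ^ q * Bin 2) $ m = Bin (q+2) $ (m - q)"
        using qm by (simp add: fps_X_power_mult_nth)
      moreover have "Bin (q+2) $ (m - q) = (- (of_nat q + 2)) gchoose (m - q)"
        unfolding Bin_def fps_binomial_nth by (simp only: of_nat_add of_nat_numeral)
      ultimately show "BB $ q * (GG ^ q * Bin 2) $ m = bb (q+1) * ((- (of_nat q + 2)) gchoose (m - q))"
        by (simp add: BB_def)
    qed
    finally show ?thesis .
  qed
  then show "(2 * (BB + (BB oo GG) * Bin 2)) $ m = Bin 1 $ m"
    using ident_I[of m] by (simp add: Bin1_nth Bin1_nth' BB_def)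
qed

lemma deriv_CC: "fps_deriv CC = BB * CC"
proof (rule fps_ext)
  fix j
  have "cc (Suc j) = 1 / real (Suc j) * (\<Sum>k = 1..Suc j. bb k * cc (Suc j - k))"
    by (simp add: bb_def)
  also have "(\<Sum>k = 1..Suc j. bb k * cc (Suc j - k)) = (\<Sum>i = 0..j. bb (Suc i) * cc (j - i))"
    unfolding One_nat_def sum.shift_bounds_cl_Suc_ivl by simp
  finally have "real (Suc j) * cc (Suc j) = (\<Sum>i = 0..j. bb (Suc i) * cc (j - i))"
    by simp
  then show "fps_deriv CC $ j = (BB * CC) $ j"
    by (simp add: CC_def BB_def fps_mult_nth)
qed

definition TT :: "real fps" where "TT = CC * CC"
definition VV :: "real fps" where "VV = TT * (TT oo GG)"

lemma deriv_TT: "fps_deriv TT = BB * TT + BB * TT"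
  unfolding TT_def by (simp add: deriv_CC algebra_simps)

lemma VV_ode: "(1 + fps_X) * fps_deriv VV = VV"
proof -
  have dTG: "fps_deriv (TT oo GG) = ((BB oo GG) * (TT oo GG) + (BB oo GG) * (TT oo GG)) * Bin 2"
    by (simp add: fps_compose_deriv[OF GG0] deriv_TT deriv_GG fps_compose_add_distrib
        fps_compose_mult_distrib[OF GG0])
  have "fps_deriv VV = VV * (2 * (BB + (BB oo GG) * Bin 2))"
    unfolding VV_def by (simp add: dTG deriv_TT algebra_simps)
  also have "\<dots> = VV * Bin 1" by (simp only: K_ident)
  finally have e: "fps_deriv VV = VV * Bin 1" .
  have "(1 + fps_X) * fps_deriv VV = VV * (Bin 1 * (1 + fps_X))" unfolding e by (simp add: algebra_simps)
  then show ?thesis by (simp only: Bin1_X mult_1_right)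
qed

lemma VV0: "VV $ 0 = 1"
  by (simp add: VV_def TT_def CC_def)

lemma VV_eq: "VV = 1 + fps_X"
proof -
  have oX: "((1 + fps_X) * F) $ n = F $ n + (if n = 0 then 0 else F $ (n - 1))" for F :: "real fps" and n
    by (simp add: distrib_right)
  have rec: "real (Suc n) * VV $ Suc n = (1 - real n) * VV $ n" for n
  proof -
    have "((1 + fps_X) * fps_deriv VV) $ n = VV $ n" by (simp add: VV_ode)
    then have "fps_deriv VV $ n + (if n = 0 then 0 else fps_deriv VV $ (n - 1)) = VV $ n"
      by (simp only: oX)
    then show ?thesis by (cases n) (simp_all add: algebra_simps)
  qed
  have "VV $ n = (1 + fps_X :: real fps) $ n" for n
  proof (induction n)
    case 0 then show ?case by (simp add: VV0)
  next
    case (Suc n)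
    show ?case
    proof (cases "n = 0")
      case True then show ?thesis using rec[of 0] VV0 by simp
    next
      case False
      then have "(1 - real n) * VV $ n = 0"
        using Suc.IH by (cases "n = 1") auto
      then have "real (Suc n) * VV $ Suc n = 0" using rec[of n] by simp
      then have "VV $ Suc n = 0" by simp
      then show ?thesis using False by simp
    qed
  qed
  then show ?thesis by (simp add: fps_ext)
qed




definition sig :: "nat \<Rightarrow> real" where "sig p = TT $ p"
definition Tr :: "nat \<Rightarrow> real \<Rightarrow> real" where "Tr M x = (\<Sum>p\<le>M. sig p * x ^ p)"

lemma TT_GG: "TT * (TT oo GG) = 1 + fps_X"
  using VV_eq unfolding VV_def .

lemma Xpow_Bin: "(1 + fps_X) ^ j * Bin j = 1"
proof (induction j)
  case 0 then show ?case by (simp add: Bin_0)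
next
  case (Suc j)
  have "(1 + fps_X) ^ Suc j * Bin (Suc j) = ((1 + fps_X) ^ j * Bin j) * (Bin 1 * (1 + fps_X))"
    using Bin_add[of j 1] by (simp add: algebra_simps)
  then show ?case by (simp only: Suc.IH Bin1_X mult_1_left)
qed

lemma poly_coeffs_vanish:
  fixes M :: nat
  defines "pT \<equiv> (\<Sum>p\<le>M. monom (sig p) p)"
  defines "pQ \<equiv> (\<Sum>j\<le>M. monom (sig j) j * [:1,1:] ^ (M - j))"
  assumes "i \<le> M"
  shows "coeff (pT * pQ - [:1,1:] ^ (M+1)) i = 0"
proof -
  let ?S = "(\<Sum>j\<le>M. fps_const (TT $ j) * GG ^ j)"
  have fT: "fps_of_poly pT $ k = TT $ k" if "k \<le> M" for k
    using that unfolding pT_def by (simp add: coeff_sum coeff_monom sig_def)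
  have fQ: "fps_of_poly pQ = (1 + fps_X) ^ M * ?S"
  proof -
    have "fps_of_poly pQ = (\<Sum>j\<le>M. fps_const (sig j) * fps_X ^ j * (1 + fps_X) ^ (M - j))"
      unfolding pQ_def by (simp add: fps_of_poly_sum fps_of_poly_monom fps_of_poly_mult
          fps_of_poly_power fps_of_poly_pCons)
    also have "\<dots> = (\<Sum>j\<le>M. (1 + fps_X) ^ M * (fps_const (TT $ j) * GG ^ j))"
    proof (rule sum.cong[OF refl])
      fix j assume "j \<in> {..M}"
      then have jM: "j \<le> M" by simp
      have "(1 + fps_X :: real fps) ^ M * GG ^ j = (1 + fps_X) ^ (M - j) * fps_X ^ j * ((1 + fps_X) ^ j * Bin j)"
        unfolding GG_power using jM by (simp add: power_add[symmetric] algebra_simps)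
      also have "\<dots> = (1 + fps_X) ^ (M - j) * fps_X ^ j" by (simp only: Xpow_Bin mult_1_right)
      finally show "fps_const (sig j) * fps_X ^ j * (1 + fps_X) ^ (M - j) = (1 + fps_X) ^ M * (fps_const (TT $ j) * GG ^ j)"
        by (simp add: sig_def algebra_simps)
    qed
    also have "\<dots> = (1 + fps_X) ^ M * ?S" by (simp add: sum_distrib_left)
    finally show ?thesis .
  qed
  have "coeff (pT * pQ) i = (fps_of_poly pT * fps_of_poly pQ) $ i"
    by (simp add: fps_of_poly_mult[symmetric])
  also have "\<dots> = (TT * fps_of_poly pQ) $ i"
    by (rule mult_trunc) (use assms fT in auto)
  also have "\<dots> = (?S * (TT * (1 + fps_X) ^ M)) $ i"
    unfolding fQ by (simp add: algebra_simps)
  also have "\<dots> = ((TT oo GG) * (TT * (1 + fps_X) ^ M)) $ i"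
    by (rule mult_trunc, rule compose_trunc[symmetric]) (use assms in auto)
  also have "\<dots> = ((TT * (TT oo GG)) * (1 + fps_X) ^ M) $ i"
    by (simp add: algebra_simps)
  also have "\<dots> = ((1 + fps_X) ^ (M+1)) $ i"
    unfolding TT_GG by simp
  also have "\<dots> = coeff ([:1,1:] ^ (M+1)) i"
  proof -
    have e: "fps_of_poly [:1,1::real:] = 1 + fps_X" using fps_of_poly_linear'[of "1::real"] by simp
    show ?thesis by (simp only: fps_of_poly_nth[symmetric] fps_of_poly_power e)
  qed
  finally show ?thesis by simp
qed

lemma poly_small:
  fixes p :: "real poly"
  assumes "\<And>i. i \<le> M \<Longrightarrow> coeff p i = 0" and "0 \<le> x" "x \<le> 1"
  shows "\<bar>poly p x\<bar> \<le> (\<Sum>i\<le>degree p. \<bar>coeff p i\<bar>) * x ^ (M+1)"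
proof -
  have "\<bar>poly p x\<bar> = \<bar>\<Sum>i\<le>degree p. coeff p i * x ^ i\<bar>" by (simp add: poly_altdef)
  also have "\<dots> \<le> (\<Sum>i\<le>degree p. \<bar>coeff p i * x ^ i\<bar>)" by (rule sum_abs)
  also have "\<dots> \<le> (\<Sum>i\<le>degree p. \<bar>coeff p i\<bar> * x ^ (M+1))"
  proof (rule sum_mono)
    fix i assume "i \<in> {..degree p}"
    show "\<bar>coeff p i * x ^ i\<bar> \<le> \<bar>coeff p i\<bar> * x ^ (M+1)"
    proof (cases "i \<le> M")
      case True then show ?thesis using assms by simp
    next
      case False
      then have "x ^ i \<le> x ^ (M+1)" using assms by (intro power_decreasing) auto
      then show ?thesis using assms by (simp add: abs_mult mult_left_mono)
    qed
  qed
  also have "\<dots> = (\<Sum>i\<le>degree p. \<bar>coeff p i\<bar>) * x ^ (M+1)" by (simp add: sum_distrib_right)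
  finally show ?thesis .
qed

lemma E_bound: "\<exists>K. \<forall>x. 0 \<le> x \<and> x \<le> 1 \<longrightarrow> \<bar>Tr M x * Tr M (x / (1 + x)) - (1 + x)\<bar> \<le> K * x ^ (M+1)"
proof -
  define pT where "pT = (\<Sum>p\<le>M. monom (sig p) p)"
  define pQ where "pQ = (\<Sum>j\<le>M. monom (sig j) j * [:1,1:] ^ (M - j))"
  define pR where "pR = pT * pQ - [:1,1:] ^ (M+1)"
  define K where "K = (\<Sum>i\<le>degree pR. \<bar>coeff pR i\<bar>)"
  have cR: "coeff pR i = 0" if "i \<le> M" for i
    unfolding pR_def pT_def pQ_def by (rule poly_coeffs_vanish[OF that])
  show ?thesis
  proof (intro exI allI impI)
    fix x :: real assume x: "0 \<le> x \<and> x \<le> 1"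
    have x1: "1 + x > 0" using x by simp
    have pT: "poly pT x = Tr M x" unfolding pT_def Tr_def by (simp add: poly_sum poly_monom)
    have pQ: "poly pQ x = (1 + x) ^ M * Tr M (x / (1 + x))"
    proof -
      have "poly pQ x = (\<Sum>j\<le>M. sig j * x ^ j * (1 + x) ^ (M - j))"
        unfolding pQ_def by (simp add: poly_sum poly_monom algebra_simps)
      also have "\<dots> = (\<Sum>j\<le>M. (1 + x) ^ M * (sig j * (x / (1 + x)) ^ j))"
      proof (rule sum.cong[OF refl])
        fix j assume "j \<in> {..M}"
        then have "(1 + x) ^ M = (1 + x) ^ (M - j) * (1 + x) ^ j" by (simp add: power_add[symmetric])
        then show "sig j * x ^ j * (1 + x) ^ (M - j) = (1 + x) ^ M * (sig j * (x / (1 + x)) ^ j)"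
          using x1 by (simp add: power_divide field_simps)
      qed
      also have "\<dots> = (1 + x) ^ M * Tr M (x / (1 + x))" unfolding Tr_def by (simp add: sum_distrib_left)
      finally show ?thesis .
    qed
    have "poly pR x = (1 + x) ^ M * (Tr M x * Tr M (x / (1 + x)) - (1 + x))"
      unfolding pR_def using pT pQ by (simp add: algebra_simps)
    then have h: "Tr M x * Tr M (x / (1 + x)) - (1 + x) = poly pR x / (1 + x) ^ M"
      using x1 by (simp add: field_simps)
    have "\<bar>Tr M x * Tr M (x / (1 + x)) - (1 + x)\<bar> = \<bar>poly pR x\<bar> / (1 + x) ^ M"
      unfolding h using x1 by (simp add: abs_divide power_abs)
    also have "\<dots> \<le> \<bar>poly pR x\<bar> / 1"
      using x by (intro divide_left_mono) (auto intro: one_le_power)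
    also have "\<dots> \<le> K * x ^ (M+1)"
      unfolding K_def div_by_1 by (rule poly_small) (use cR x in auto)
    finally show "\<bar>Tr M x * Tr M (x / (1 + x)) - (1 + x)\<bar> \<le> K * x ^ (M+1)" .
  qed
qed




lemma tele_sum: "a > 0 \<Longrightarrow> (\<Sum>i<k. 1 / ((a + real i) * (a + real i + 1))) = 1 / a - 1 / (a + real k)"
proof (induction k)
  case 0 then show ?case by simp
next
  case (Suc k)
  have "1 / ((a + real k) * (a + real k + 1)) = 1 / (a + real k) - 1 / (a + real (Suc k))"
    using Suc.prems by (simp add: field_simps)
  then show ?case using Suc by simp
qed

lemma term_le:
  fixes a :: real and m i :: nat
  assumes a: "a \<ge> 2" and m: "m \<ge> 2"
  shows "1 / (a + 2 * real i) ^ m \<le> (1 / a ^ (m - 2)) * (1 / ((a - 1 + real i) * (a - 1 + real i + 1)))"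
proof -
  have p1: "a ^ (m - 2) \<le> (a + 2 * real i) ^ (m - 2)" using a by (intro power_mono) auto
  have p2: "(a - 1 + real i) * (a - 1 + real i + 1) \<le> (a + 2 * real i) ^ 2"
    using a by (simp add: power2_eq_square algebra_simps)
  have pos: "0 < (a - 1 + real i) * (a - 1 + real i + 1)" using a by simp
  have "a ^ (m - 2) * ((a - 1 + real i) * (a - 1 + real i + 1)) \<le> (a + 2 * real i) ^ (m - 2) * (a + 2 * real i) ^ 2"
    using p1 p2 pos a by (intro mult_mono) auto
  also have "\<dots> = (a + 2 * real i) ^ m" using m by (metis le_add_diff_inverse2 power_add)
  finally have le: "a ^ (m - 2) * ((a - 1 + real i) * (a - 1 + real i + 1)) \<le> (a + 2 * real i) ^ m" .
  have "0 < a ^ (m - 2) * ((a - 1 + real i) * (a - 1 + real i + 1))" using a pos by simp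
  then have "1 / (a + 2 * real i) ^ m \<le> 1 / (a ^ (m - 2) * ((a - 1 + real i) * (a - 1 + real i + 1)))"
    using le by (intro divide_left_mono) auto
  then show ?thesis by simp
qed

lemma tail_sum_bound:
  fixes n m k :: nat and K :: real
  assumes n: "n \<ge> 2" and m: "m \<ge> 2" and K: "K \<ge> 0"
  shows "(\<Sum>i<k. 2 * K / real (n + 2 * i) ^ m) \<le> 4 * K / real n ^ (m - 1)"
proof -
  let ?a = "real n"
  have a2: "?a \<ge> 2" using n by simp
  have "(\<Sum>i<k. 2 * K / real (n + 2 * i) ^ m)
      \<le> (\<Sum>i<k. 2 * K * ((1 / ?a ^ (m - 2)) * (1 / ((?a - 1 + real i) * (?a - 1 + real i + 1)))))"
  proof (rule sum_mono)
    fix i assume "i \<in> {..<k}"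
    have "1 / real (n + 2 * i) ^ m \<le> (1 / ?a ^ (m - 2)) * (1 / ((?a - 1 + real i) * (?a - 1 + real i + 1)))"
      using term_le[OF a2 m, of i] by simp
    then show "2 * K / real (n + 2 * i) ^ m \<le> 2 * K * ((1 / ?a ^ (m - 2)) * (1 / ((?a - 1 + real i) * (?a - 1 + real i + 1))))"
      using K by (metis mult_left_mono times_divide_eq_right mult_1_right zero_le_mult_iff zero_le_numeral)
  qed
  also have "\<dots> = 2 * K * (1 / ?a ^ (m - 2)) * (\<Sum>i<k. 1 / ((?a - 1 + real i) * (?a - 1 + real i + 1)))"
    by (simp add: sum_distrib_left mult.assoc)
  also have "\<dots> \<le> 2 * K * (1 / ?a ^ (m - 2)) * (2 / ?a)"
  proof (rule mult_left_mono)
    have "(\<Sum>i<k. 1 / ((?a - 1 + real i) * (?a - 1 + real i + 1))) = 1 / (?a - 1) - 1 / (?a - 1 + real k)"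
      using a2 by (intro tele_sum) simp
    also have "\<dots> \<le> 1 / (?a - 1)" using a2 by simp
    also have "\<dots> \<le> 2 / ?a" using a2 by (simp add: field_simps)
    finally show "(\<Sum>i<k. 1 / ((?a - 1 + real i) * (?a - 1 + real i + 1))) \<le> 2 / ?a" .
  qed (use K a2 in simp)
  also have "2 * K * (1 / ?a ^ (m - 2)) * (2 / ?a) = 4 * K / ?a ^ (m - 1)"
  proof -
    have "?a ^ (m - 1) = ?a ^ (m - 2) * ?a" using m by (simp add: power_Suc2[symmetric] Suc_diff_Suc numeral_2_eq_2)
    then show ?thesis using a2 by (simp add: field_simps)
  qed
  finally show ?thesis .
qed

lemma tele_bound:
  fixes lam :: "nat \<Rightarrow> real"
  assumes lim: "lam \<longlonglongrightarrow> 0" and n0: "n0 \<ge> 2" and K: "K \<ge> 0" and m: "m \<ge> 2"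
    and step: "\<And>n. n \<ge> n0 \<Longrightarrow> \<bar>lam n + lam (Suc n)\<bar> \<le> K / real n ^ m"
    and n: "n \<ge> n0"
  shows "\<bar>lam n\<bar> \<le> 4 * K / real n ^ (m - 1)"
proof -
  have st2: "\<bar>lam j - lam (j + 2)\<bar> \<le> 2 * K / real j ^ m" if "j \<ge> n0" for j
  proof -
    have j1: "real j \<ge> 1" using that n0 by simp
    have "\<bar>lam (Suc j) + lam (Suc (Suc j))\<bar> \<le> K / real (Suc j) ^ m" using step[of "Suc j"] that by simp
    also have "\<dots> \<le> K / real j ^ m" using K j1
      by (intro divide_left_mono power_mono) auto
    finally have b: "\<bar>lam (Suc j) + lam (Suc (Suc j))\<bar> \<le> K / real j ^ m" .
    have "\<bar>lam j - lam (j + 2)\<bar> = \<bar>(lam j + lam (Suc j)) - (lam (Suc j) + lam (Suc (Suc j)))\<bar>"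
      by (simp add: numeral_2_eq_2)
    also have "\<dots> \<le> K / real j ^ m + K / real j ^ m" using step[OF that] b by linarith
    finally show ?thesis by simp
  qed
  have a: "\<bar>lam n - lam (n + 2 * k)\<bar> \<le> (\<Sum>i<k. 2 * K / real (n + 2 * i) ^ m)" for k
  proof (induction k)
    case 0 then show ?case by simp
  next
    case (Suc k)
    have "\<bar>lam (n + 2 * k) - lam (n + 2 * k + 2)\<bar> \<le> 2 * K / real (n + 2 * k) ^ m"
      using st2[of "n + 2 * k"] n by simp
    moreover have "n + 2 * Suc k = n + 2 * k + 2" by simp
    ultimately show ?case using Suc.IH by (simp del: of_nat_add add: abs_triangle_ineq4)
  qed
  have b: "\<bar>lam n\<bar> \<le> \<bar>lam (n + 2 * k)\<bar> + 4 * K / real n ^ (m - 1)" for k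
  proof -
    have "\<bar>lam n\<bar> \<le> \<bar>lam (n + 2 * k)\<bar> + \<bar>lam n - lam (n + 2 * k)\<bar>" by linarith
    also have "\<dots> \<le> \<bar>lam (n + 2 * k)\<bar> + 4 * K / real n ^ (m - 1)"
      using a[of k] tail_sum_bound[of n m K k] n n0 m K by linarith
    finally show ?thesis .
  qed
  have sm: "strict_mono (\<lambda>k. n + 2 * k)" by (auto simp: strict_mono_def)
  have "(lam \<circ> (\<lambda>k. n + 2 * k)) \<longlonglongrightarrow> 0" by (rule LIMSEQ_subseq_LIMSEQ[OF lim sm])
  then have "(\<lambda>k. \<bar>lam (n + 2 * k)\<bar> + 4 * K / real n ^ (m - 1)) \<longlonglongrightarrow> 0 + 4 * K / real n ^ (m - 1)"
    by (intro tendsto_add tendsto_const) (auto simp: o_def intro: tendsto_rabs_zero)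
  then have "\<bar>lam n\<bar> \<le> 0 + 4 * K / real n ^ (m - 1)"
    by (rule LIMSEQ_le_const) (use b in auto)
  then show ?thesis by simp
qed




lemma Omega_pos: "Omega k > 0"
  unfolding Omega_def by (intro divide_pos_pos Gamma_real_pos) auto

lemma Omega_rec: "Omega (k + 2) = Omega k * (2 * pi / real (k + 2))"
proof -
  have a: "real (k + 2) / 2 = real k / 2 + 1" by simp
  have g: "Gamma (real k / 2 + 1 + 1) = (real k / 2 + 1) * Gamma (real k / 2 + 1)"
    by (rule Gamma_plus1) (auto simp: nonpos_Ints_def)
  have p: "pi powr (real k / 2 + 1) = pi powr (real k / 2) * pi"
    by (simp add: powr_add)
  have gp: "Gamma (real k / 2 + 1) > 0" by (intro Gamma_real_pos) auto
  show ?thesis unfolding Omega_def a g p using gp by (simp add: field_simps)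
qed

definition AA :: "nat \<Rightarrow> real" where "AA n = Omega (n - 1) / Omega n"

lemma AA_pos: "AA n > 0" unfolding AA_def using Omega_pos by simp

lemma AA_prod: assumes "n \<ge> 1" shows "AA n * AA (n + 1) = real (n + 1) / (2 * pi)"
proof -
  obtain k where k: "n = k + 1" using assms by (metis add.commute le_Suc_ex)
  have "AA n * AA (n + 1) = Omega k / Omega (k + 2)"
    unfolding AA_def k using Omega_pos[of "k+1"] by (simp add: numeral_2_eq_2)
  also have "\<dots> = real (n + 1) / (2 * pi)"
    unfolding Omega_rec k using Omega_pos[of k] by (simp add: field_simps)
  finally show ?thesis .
qed

lemma Gamma_mid: fixes a b :: real assumes "a > 0" "b > 0"
  shows "Gamma ((a + b) / 2) ^ 2 \<le> Gamma a * Gamma b"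
proof -
  have "(ln \<circ> Gamma) ((1 - 1/2) *\<^sub>R a + (1/2) *\<^sub>R b) \<le> (1 - 1/2) * (ln \<circ> Gamma) a + (1/2) * (ln \<circ> Gamma) b"
    by (rule convex_onD[OF log_convex_Gamma_real]) (use assms in auto)
  then have l: "ln (Gamma ((a + b) / 2)) \<le> (ln (Gamma a) + ln (Gamma b)) / 2"
    by (simp add: field_simps)
  have pa: "Gamma a > 0" "Gamma b > 0" "Gamma ((a + b) / 2) > 0" using assms by auto
  have "ln (Gamma ((a + b) / 2) ^ 2) \<le> ln (Gamma a * Gamma b)"
    using l pa by (simp add: ln_mult ln_realpow)
  then show ?thesis using pa by simp
qed

lemma Omega_logconc: assumes "n \<ge> 1" shows "Omega (n - 1) * Omega (n + 1) \<le> Omega n ^ 2"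
proof -
  obtain k where k: "n = k + 1" using assms by (metis add.commute le_Suc_ex)
  let ?x = "real k / 2 + 1"
  have e1: "real (n - 1) / 2 + 1 = ?x" and e2: "real n / 2 + 1 = ?x + 1/2" and e3: "real (n + 1) / 2 + 1 = ?x + 1"
    unfolding k by (simp_all add: field_simps)
  have G: "Gamma (?x + 1/2) ^ 2 \<le> Gamma ?x * Gamma (?x + 1)"
  proof -
    have m: "(?x + (?x + 1)) / 2 = ?x + 1/2" by (simp add: field_simps)
    have "Gamma ((?x + (?x + 1)) / 2) ^ 2 \<le> Gamma ?x * Gamma (?x + 1)" by (rule Gamma_mid) auto
    then show ?thesis unfolding m .
  qed
  have pw: "pi powr (real (n - 1) / 2) * pi powr (real (n + 1) / 2) = (pi powr (real n / 2)) ^ 2"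
  proof -
    have "pi powr (real (n - 1) / 2) * pi powr (real (n + 1) / 2) = pi powr (real (n - 1) / 2 + real (n + 1) / 2)"
      by (simp add: powr_add)
    also have "real (n - 1) / 2 + real (n + 1) / 2 = real n / 2 + real n / 2" unfolding k by (simp add: field_simps)
    also have "pi powr (real n / 2 + real n / 2) = (pi powr (real n / 2)) ^ 2"
      by (simp only: powr_add power2_eq_square)
    finally show ?thesis .
  qed
  have gp: "Gamma ?x > 0" "Gamma (?x + 1) > 0" "Gamma (?x + 1/2) > 0" by (auto intro!: Gamma_real_pos)
  have pp: "pi powr (real n / 2) > 0" by simp
  have "Omega (n - 1) * Omega (n + 1) = (pi powr (real n / 2)) ^ 2 / (Gamma ?x * Gamma (?x + 1))"
    unfolding Omega_def e1 e3 using pw by (simp add: field_simps)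
  also have "\<dots> \<le> (pi powr (real n / 2)) ^ 2 / Gamma (?x + 1/2) ^ 2"
  proof (rule divide_left_mono[OF G])
    show "0 < Gamma ?x * Gamma (?x + 1) * Gamma (?x + 1/2) ^ 2" using gp by (intro mult_pos_pos zero_less_power)
  qed simp
  also have "\<dots> = Omega n ^ 2" unfolding Omega_def e2 by (simp add: power_divide)
  finally show ?thesis .
qed

lemma AA_mono: assumes "n \<ge> 1" shows "AA n \<le> AA (n + 1)"
proof -
  have "Omega (n - 1) * Omega (n + 1) \<le> Omega n * Omega n"
    using Omega_logconc[OF assms] by (simp add: power2_eq_square)
  then show ?thesis unfolding AA_def using Omega_pos[of n] Omega_pos[of "n+1"]
    by (simp add: divide_le_eq le_divide_eq field_simps)
qed

lemma r_bounds: assumes "n \<ge> 2"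
  shows "real n / (2 * pi) \<le> AA n ^ 2" "AA n ^ 2 \<le> real (n + 1) / (2 * pi)"
proof -
  have "AA n ^ 2 \<le> AA n * AA (n + 1)"
    using AA_mono[of n] AA_pos[of n] assms by (simp add: power2_eq_square)
  then show "AA n ^ 2 \<le> real (n + 1) / (2 * pi)" using AA_prod[of n] assms by simp
  have "AA (n - 1) * AA n \<le> AA n ^ 2"
    using AA_mono[of "n - 1"] AA_pos[of n] assms by (simp add: power2_eq_square)
  moreover have "AA (n - 1) * AA n = real n / (2 * pi)"
    using AA_prod[of "n - 1"] assms by simp
  ultimately show "real n / (2 * pi) \<le> AA n ^ 2" by simp
qed




lemma sig0: "sig 0 = 1"
  by (simp add: sig_def TT_def CC_def)

lemma sig1: "sig 1 = 1/2"
proof -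
  have "(TT * (TT oo GG)) $ 1 = (1 + fps_X :: real fps) $ 1" by (simp only: TT_GG)
  moreover have "(TT * (TT oo GG)) $ 1 = TT $ 0 * (TT oo GG) $ 1 + TT $ 1 * (TT oo GG) $ 0"
    by (simp add: fps_mult_nth)
  moreover have "(TT oo GG) $ 1 = TT $ 1"
    by (simp add: fps_compose_nth GG_def Bin_nth)
  moreover have "TT $ 0 = 1" using sig0 by (simp add: sig_def)
  ultimately show ?thesis by (simp add: sig_def)
qed

lemma ss_sig: "ss j = sig (Suc j) / (2 * pi)"
  by (simp add: ss_def sig_def TT_def CC_def fps_mult_nth)

lemma Tr_lim: "(\<lambda>n. Tr M (1 / real n)) \<longlonglongrightarrow> 1"
proof -
  have "(\<lambda>n. Tr M (1 / real n)) \<longlonglongrightarrow> (\<Sum>p\<le>M. sig p * 0 ^ p)"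
    unfolding Tr_def by (intro tendsto_intros lim_1_over_n)
  also have "(\<Sum>p\<le>M. sig p * (0::real) ^ p) = 1"
    by (simp add: power_0_left sig0 sum.atMost_shift)
  finally show ?thesis .
qed

lemma Tr_bound: "0 \<le> x \<Longrightarrow> x \<le> 1 \<Longrightarrow> \<bar>Tr M x\<bar> \<le> (\<Sum>p\<le>M. \<bar>sig p\<bar>)"
  unfolding Tr_def
  by (rule order.trans[OF sum_abs], rule sum_mono) (auto simp: abs_mult power_le_one mult_left_le)

lemma ln_small: fixes u :: real assumes "\<bar>u\<bar> \<le> 1/2" shows "\<bar>ln (1 + u)\<bar> \<le> 2 * \<bar>u\<bar>"
proof -
  have "\<bar>ln (1 + u) - u\<bar> \<le> 2 * u\<^sup>2" by (rule abs_ln_one_plus_x_minus_x_bound) fact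
  moreover have "2 * u\<^sup>2 \<le> \<bar>u\<bar>"
  proof -
    have "2 * u\<^sup>2 = (2 * \<bar>u\<bar>) * \<bar>u\<bar>" by (simp add: power2_eq_square abs_mult_self_eq)
    also have "\<dots> \<le> 1 * \<bar>u\<bar>" using assms by (intro mult_right_mono) auto
    finally show ?thesis by simp
  qed
  ultimately show ?thesis by linarith
qed

lemma exp_small: fixes z :: real assumes "\<bar>z\<bar> \<le> 1/2" shows "\<bar>exp z - 1\<bar> \<le> 2 * \<bar>z\<bar>"
proof -
  have "norm (exp z) \<le> 1 + 2 * norm z" by (rule exp_bound_lemma) (use assms in simp)
  then have "exp z \<le> 1 + 2 * \<bar>z\<bar>" by simp
  moreover have "1 + z \<le> exp z" by simp
  ultimately show ?thesis using abs_ge_minus_self[of z] unfolding abs_le_iff by linarith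
qed




lemma P_expand:
  assumes n: "n > 0"
  shows "real n / (2 * pi) * Tr (N + 2) (1 / real n)
       = (real n + 1/2) / (2 * pi) + (\<Sum>j = 1..N. ss j / real n ^ j) + ss (Suc N) / real n ^ Suc N"
proof -
  define h where "h j = ss j / real n ^ j" for j
  have t: "real n / (2 * pi) * (sig (Suc j) * (1 / real n) ^ Suc j) = h j" for j
    using n unfolding h_def ss_sig by (simp add: field_simps)
  have "Tr (N + 2) (1 / real n) = sig 0 * (1 / real n) ^ 0 + (\<Sum>j\<le>N + 1. sig (Suc j) * (1 / real n) ^ Suc j)"
  proof -
    have e: "N + 2 = Suc (N + 1)" by simp
    show ?thesis unfolding Tr_def e sum.atMost_Suc_shift by (rule refl)
  qed
  then have "real n / (2 * pi) * Tr (N + 2) (1 / real n) = real n / (2 * pi) * (sig 0 * (1 / real n) ^ 0)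
      + (\<Sum>j\<le>N + 1. real n / (2 * pi) * (sig (Suc j) * (1 / real n) ^ Suc j))"
    by (simp only: distrib_left sum_distrib_left)
  also have "\<dots> = real n / (2 * pi) + (\<Sum>j\<le>N + 1. h j)"
    by (simp only: t sig0 power_0 mult_1_right)
  also have "(\<Sum>j\<le>N + 1. h j) = h 0 + (\<Sum>j=1..N + 1. h j)"
    by (simp add: atMost_atLeast0 sum.atLeast_Suc_atMost)
  also have "(\<Sum>j=1..N + 1. h j) = (\<Sum>j=1..N. h j) + h (Suc N)"
    by simp
  also have "h 0 = 1 / (4 * pi)" unfolding h_def ss_sig using sig1 by (simp add: field_simps)
  finally show ?thesis unfolding h_def by (simp add: field_simps)
qed




theorem theorem10:
  fixes N :: nat
  shows "(\<lambda>n::nat. (Omega (n - 1) / Omega n) ^ 2 - (real n + 1/2) / (2 * pi)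
            - (\<Sum>j = 1..N. ss j / real n ^ j))
         \<in> O(\<lambda>n::nat. 1 / real n ^ (N + 1))"
proof -
  define M where "M = N + 2"
  define P where "P n = real n / (2 * pi) * Tr M (1 / real n)" for n
  define r where "r n = AA n ^ 2" for n
  define lam where "lam n = ln (r n / P n)" for n
  define S where "S = (\<Sum>p\<le>M. \<bar>sig p\<bar>)"
  obtain K0 where K0: "\<And>x. 0 \<le> x \<Longrightarrow> x \<le> 1 \<Longrightarrow> \<bar>Tr M x * Tr M (x / (1 + x)) - (1 + x)\<bar> \<le> K0 * x ^ (M+1)"
    using E_bound[of M] by blast
  have K0pos: "K0 \<ge> 0"
  proof -
    have "\<bar>Tr M 1 * Tr M (1 / (1 + 1)) - (1 + 1)\<bar> \<le> K0 * 1 ^ (M+1)" by (rule K0) auto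
    then show ?thesis by (metis abs_ge_zero order.trans power_one mult_1_right)
  qed
  have S0: "S \<ge> 0" unfolding S_def by (simp add: sum_nonneg)
  have "\<forall>\<^sub>F n in sequentially. 1/2 < Tr M (1 / real n)"
    using order_tendstoD(1)[OF Tr_lim[of M], of "1/2"] by simp
  then obtain n1 where n1: "\<And>n. n \<ge> n1 \<Longrightarrow> 1/2 < Tr M (1 / real n)"
    unfolding eventually_sequentially by blast
  define n0 where "n0 = max (max n1 2) (nat \<lceil>16 * K0\<rceil> + 1)"
  have n0: "n0 \<ge> 2" "n0 \<ge> n1" "real n0 \<ge> 16 * K0" unfolding n0_def by linarith+
  have big: "real n \<ge> 2" "1/2 < Tr M (1 / real n)" "real n \<ge> 16 * K0" if "n \<ge> n0" for n
    using that n0 n1[of n] by auto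
  have Ppos: "P n > 0" if "n \<ge> n0" for n
    using big[OF that] unfolding P_def by (intro mult_pos_pos divide_pos_pos) auto
  have rpos: "r n > 0" for n unfolding r_def using AA_pos[of n] by simp

  have step: "\<bar>lam n + lam (Suc n)\<bar> \<le> (2 * K0) / real n ^ (M+1)" if nn: "n \<ge> n0" for n
  proof -
    define x where "x = 1 / real n"
    have x: "0 < x" "x \<le> 1/2" unfolding x_def using big[OF nn] by (auto simp: field_simps)
    have y: "1 / real (Suc n) = x / (1 + x)" unfolding x_def using big[OF nn] by (simp add: field_simps)
    define D where "D = Tr M x * Tr M (x / (1 + x))"
    have TrS: "Tr M (1 / real (Suc n)) > 1/2" using big[of "Suc n"] nn by simp
    have Dpos: "D > 0" unfolding D_def using big(2)[OF nn] TrS unfolding x_def y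
      by (intro mult_pos_pos) auto
    have rr: "r n * r (Suc n) = (real (Suc n) / (2 * pi)) ^ 2"
      unfolding r_def using AA_prod[of n] big[OF nn] by (simp add: power_mult_distrib[symmetric])
    have PP: "P n * P (Suc n) = real n * real (Suc n) / (4 * pi ^ 2) * D"
      unfolding P_def D_def x_def y[symmetric] by (simp add: power2_eq_square field_simps)
    have Q: "(r n / P n) * (r (Suc n) / P (Suc n)) = (1 + x) / D"
    proof -
      have "(r n / P n) * (r (Suc n) / P (Suc n)) = (r n * r (Suc n)) / (P n * P (Suc n))" by simp
      also have "\<dots> = (real (Suc n) / (2 * pi)) ^ 2 / (real n * real (Suc n) / (4 * pi ^ 2) * D)"
        unfolding rr PP ..
      also have "\<dots> = (1 + x) / D"
      proof -
        have sn: "real (Suc n) = real n * (1 + x)" unfolding x_def using big[OF nn] by (simp add: field_simps)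
        have n0': "real n > 0" using big[OF nn] by simp
        define A where "A = real n * (real n * (1 + x)) / (4 * pi ^ 2)"
        have Ap: "A > 0" unfolding A_def using n0' x by simp
        have e1: "(real n * (1 + x) / (2 * pi)) ^ 2 = A * (1 + x)"
          unfolding A_def by (simp add: power2_eq_square field_simps)
        have e2: "real n * (real n * (1 + x)) / (4 * pi ^ 2) * D = A * D" unfolding A_def ..
        show ?thesis unfolding sn e1 e2 using Ap by simp
      qed
      finally show ?thesis .
    qed
    define u where "u = (D - (1 + x)) / (1 + x)"
    have u_le: "\<bar>u\<bar> \<le> K0 * x ^ (M+1)"
    proof -
      have "\<bar>u\<bar> = \<bar>D - (1 + x)\<bar> / (1 + x)" unfolding u_def using x by simp
      also have "\<dots> \<le> \<bar>D - (1 + x)\<bar> / 1" using x by (intro divide_left_mono) auto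
      also have "\<dots> \<le> K0 * x ^ (M+1)" unfolding D_def using K0[of x] x by simp
      finally show ?thesis .
    qed
    have xM: "x ^ (M+1) \<le> x" using power_decreasing[of 1 "M+1" x] x by simp
    have u_half: "\<bar>u\<bar> \<le> 1/2"
    proof -
      have "\<bar>u\<bar> \<le> K0 * x" using u_le xM K0pos by (meson mult_left_mono order.trans)
      also have "\<dots> \<le> 1/2" unfolding x_def using big(3)[OF nn] big(1)[OF nn] K0pos
        by (simp add: field_simps)
      finally show ?thesis .
    qed
    have "lam n + lam (Suc n) = ln ((r n / P n) * (r (Suc n) / P (Suc n)))"
    proof -
      have pa: "r n / P n > 0" using rpos[of n] Ppos[OF nn] by simp
      have pb: "r (Suc n) / P (Suc n) > 0" using rpos[of "Suc n"] Ppos[of "Suc n"] nn by simp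
      show ?thesis unfolding lam_def by (subst ln_mult) (use pa pb in auto)
    qed
    also have "\<dots> = - ln (1 + u)"
    proof -
      have "1 + u = D / (1 + x)" unfolding u_def using x by (simp add: field_simps)
      then have "(1 + x) / D = inverse (1 + u)" by simp
      then show ?thesis unfolding Q using u_half by (simp add: ln_inverse)
    qed
    finally have "\<bar>lam n + lam (Suc n)\<bar> = \<bar>ln (1 + u)\<bar>" by simp
    also have "\<dots> \<le> 2 * \<bar>u\<bar>" by (rule ln_small[OF u_half])
    also have "\<dots> \<le> 2 * (K0 * x ^ (M+1))" using u_le by simp
    also have "\<dots> = (2 * K0) / real n ^ (M+1)" unfolding x_def by (simp add: power_divide)
    finally show ?thesis .
  qed

  have lam_lim: "lam \<longlonglongrightarrow> 0"
  proof -
    have q1: "(\<lambda>n. r n / (real n / (2 * pi))) \<longlonglongrightarrow> 1"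
    proof (rule tendsto_sandwich[of "\<lambda>n. 1" _ _ "\<lambda>n. 1 + 1 / real n"])
      show "\<forall>\<^sub>F n in sequentially. 1 \<le> r n / (real n / (2 * pi))"
        unfolding eventually_sequentially
        using r_bounds(1) by (intro exI[of _ 2]) (auto simp: r_def field_simps)
      show "\<forall>\<^sub>F n in sequentially. r n / (real n / (2 * pi)) \<le> 1 + 1 / real n"
        unfolding eventually_sequentially
      proof (intro exI[of _ 2] allI impI)
        fix n :: nat assume "2 \<le> n"
        then have "r n \<le> real (n + 1) / (2 * pi)" using r_bounds(2)[of n] by (simp add: r_def)
        then show "r n / (real n / (2 * pi)) \<le> 1 + 1 / real n" using \<open>2 \<le> n\<close>
          by (simp add: field_simps)
      qed
      show "(\<lambda>n. 1 + 1 / real n) \<longlonglongrightarrow> 1" using tendsto_add[OF tendsto_const lim_1_over_n, of 1] by simp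
    qed simp
    have "(\<lambda>n. ln ((r n / (real n / (2 * pi))) / Tr M (1 / real n))) \<longlonglongrightarrow> ln (1 / 1)"
      by (intro tendsto_ln tendsto_divide q1 Tr_lim) auto
    moreover have "\<forall>\<^sub>F n in sequentially. ln ((r n / (real n / (2 * pi))) / Tr M (1 / real n)) = lam n"
      unfolding eventually_sequentially lam_def P_def
      by (intro exI[of _ 1]) (simp add: field_simps)
    ultimately show ?thesis using tendsto_cong by fastforce
  qed

  have lam_bd: "\<bar>lam n\<bar> \<le> 4 * (2 * K0) / real n ^ M" if "n \<ge> n0" for n
    using tele_bound[OF lam_lim n0(1) _ _ step that, of] K0pos by (simp add: M_def)

  have main: "\<bar>r n - P n\<bar> \<le> (16 * S * K0) / real n ^ (N+1)" if nn: "n \<ge> n0" for n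
  proof -
    have n2: "real n \<ge> 2" using big[OF nn] by simp
    have lh: "\<bar>lam n\<bar> \<le> 1/2"
    proof -
      have "real n ^ 1 \<le> real n ^ M" using n2 by (intro power_increasing) (auto simp: M_def)
      then have "4 * (2 * K0) / real n ^ M \<le> 4 * (2 * K0) / real n"
        using n2 K0pos by (intro divide_left_mono) auto
      also have "\<dots> \<le> 1/2" using big(3)[OF nn] n2 K0pos by (simp add: field_simps)
      finally show ?thesis using lam_bd[OF nn] by linarith
    qed
    have rP: "r n = P n * exp (lam n)"
      unfolding lam_def using rpos[of n] Ppos[OF nn] by simp
    have Pb: "P n \<le> real n * S"
    proof -
      have "Tr M (1 / real n) \<le> S" unfolding S_def using Tr_bound[of "1 / real n" M] n2 by auto
      moreover have "real n / (2 * pi) \<le> real n" using n2 pi_gt3 by (simp add: field_simps)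
      ultimately have "real n / (2 * pi) * Tr M (1 / real n) \<le> real n * S"
        using n2 S0 Ppos[OF nn] big(2)[OF nn] by (intro mult_mono) (auto simp: P_def zero_less_mult_iff)
      then show ?thesis by (simp add: P_def)
    qed
    have "\<bar>r n - P n\<bar> = P n * \<bar>exp (lam n) - 1\<bar>"
    proof -
      have "P n * exp (lam n) - P n = P n * (exp (lam n) - 1)" by (simp add: algebra_simps)
      then show ?thesis unfolding rP using Ppos[OF nn] by (simp only: abs_mult)
    qed
    also have "\<dots> \<le> (real n * S) * (2 * (4 * (2 * K0) / real n ^ M))"
    proof (rule mult_mono)
      show "\<bar>exp (lam n) - 1\<bar> \<le> 2 * (4 * (2 * K0) / real n ^ M)"
        using exp_small[OF lh] lam_bd[OF nn] by linarith
    qed (use Pb Ppos[OF nn] n2 S0 in auto)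
    also have "\<dots> = (16 * S * K0) / real n ^ (N+1)"
    proof -
      have "real n ^ M = real n * real n ^ (N+1)" by (simp add: M_def)
      then show ?thesis using n2 by (simp add: field_simps)
    qed
    finally show ?thesis .
  qed

  show ?thesis
  proof (rule bigoI[where c = "16 * S * K0 + \<bar>ss (Suc N)\<bar>"])
    show "\<forall>\<^sub>F n in sequentially. norm ((Omega (n - 1) / Omega n) ^ 2 - (real n + 1/2) / (2 * pi)
            - (\<Sum>j = 1..N. ss j / real n ^ j))
          \<le> (16 * S * K0 + \<bar>ss (Suc N)\<bar>) * norm (1 / real n ^ (N + 1))"
      unfolding eventually_sequentially
    proof (intro exI[of _ n0] allI impI)
      fix n assume nn: "n \<ge> n0"
      have n2: "real n \<ge> 2" using big[OF nn] by simp
      have eq: "(Omega (n - 1) / Omega n) ^ 2 - (real n + 1/2) / (2 * pi) - (\<Sum>j = 1..N. ss j / real n ^ j)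
          = (r n - P n) + ss (Suc N) / real n ^ Suc N"
        using P_expand[of n N] n2 unfolding P_def r_def AA_def M_def by simp
      have cp: "real n ^ (N+1) > 0" using n2 by simp
      have "norm ((Omega (n - 1) / Omega n) ^ 2 - (real n + 1/2) / (2 * pi)
            - (\<Sum>j = 1..N. ss j / real n ^ j)) = \<bar>(r n - P n) + ss (Suc N) / real n ^ (N+1)\<bar>"
        unfolding eq by simp
      also have "\<dots> \<le> \<bar>r n - P n\<bar> + \<bar>ss (Suc N)\<bar> / real n ^ (N+1)"
        using cp by (simp add: abs_divide) (rule abs_triangle_ineq[THEN order.trans], simp add: abs_divide)
      also have "\<dots> \<le> (16 * S * K0) / real n ^ (N+1) + \<bar>ss (Suc N)\<bar> / real n ^ (N+1)"
        using main[OF nn] by simp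
      also have "\<dots> = (16 * S * K0 + \<bar>ss (Suc N)\<bar>) * norm (1 / real n ^ (N + 1))"
        using cp by (simp add: add_divide_distrib)
      finally show "norm ((Omega (n - 1) / Omega n) ^ 2 - (real n + 1/2) / (2 * pi)
            - (\<Sum>j = 1..N. ss j / real n ^ j))
          \<le> (16 * S * K0 + \<bar>ss (Suc N)\<bar>) * norm (1 / real n ^ (N + 1))" .
    qed
  qed
qed



end
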